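(* Fix $n\ge1$. For each $\delta\in\mathrm{MAD}(c^\times)$, the word $\Psi(\delta)$ lies in $\overline{\mathcal{M}}_{n+1}$ and $|\delta|=n-\#_{\mathtt{U}}(\Psi(\delta))$.
   Context: Place points $1,\ldots,n+1$ left to right on a horizontal line. An arc is a curve from a point $i$ to a point $j>i$ moving monotonically rightward and passing above or below each of $i+1,\ldots,j-1$; arcs are identified if they have the same endpoints and pass above the same points. A noncrossing arc diagram is a set of arcs that can be drawn so that no two share a left endpoint, no two share a right endpoint, and no two cross in their interiors; $|\delta|$ is its number of arcs. An arc from $i$ to $j$ is $c^\times$-sortable if, for each $k$ with $i<k<j$, it passes above $k$ when $k$ is odd and below $k$ when $k$ is even. $\mathrm{MAD}(c^\times)$ is the set of noncrossing arc diagrams consisting of $c^\times$-sortable arcs that are maximal under inclusion among such diagrams. For $\delta\in\mathrm{MAD}(c^\times)$, $\Psi(\delta)=\mathtt{M}_1\cdots\mathtt{M}_{n+1}$ where $\mathtt{M}_i=\mathtt{U}$ if $i\le n$ and $i+1$ is not the right endpoint of an arc of $\delta$; $\mathtt{M}_i=\mathtt{D}$ if $i\ge2$ and $i-1$ is not the left endpoint of an arc of $\delta$; and $\mathtt{M}_i=\mathtt{H}$ otherwise (it is part of the setup that the first two cases never both apply). A Motzkin path of length $m$ is a word in $\mathtt{U}$ (up step $(1,1)$), $\mathtt{D}$ (down step $(1,-1)$), $\mathtt{H}$ (horizontal step $(1,0)$) of length $m$ with equally many $\mathtt{U}$'s and $\mathtt{D}$'s and with every prefix having at least as many $\mathtt{U}$'s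 as $\mathtt{D}$'s. A peak is a consecutive occurrence $\mathtt{U}\mathtt{D}$; its height is $\#_\mathtt{U}(P)-\#_\mathtt{D}(P)$ where $P$ is the prefix ending with that $\mathtt{U}$. $\overline{\mathcal{M}}_{m}$ is the set of Motzkin paths of length $m$ with no peak of height $1$; $\#_\mathtt{U}(P)$ counts $\mathtt{U}$'s in $P$. *)

theory Defs
  imports Main
begin

text \<open>Points are 1, ..., n+1.  An arc is a triple (i, j, S): left endpoint i,
 right endpoint j, and S = the set of intermediate points the arc passes ABOVE
 (it passes below every other point of {i<..<j}).  Two arcs are identified iff
 these data agree, so triples with S a subset of {i<..<j} represent arcs exactly.\<close>

type_synonym arc = "nat \<times> nat \<times> nat set"

definition left_end :: "arc \<Rightarrow> nat" where "left_end a = fst a"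
definition right_end :: "arc \<Rightarrow> nat" where "right_end a = fst (snd a)"
definition above_set :: "arc \<Rightarrow> nat set" where "above_set a = snd (snd a)"

definition is_arc :: "nat \<Rightarrow> arc \<Rightarrow> bool" where
  "is_arc n a \<longleftrightarrow> 1 \<le> left_end a \<and> left_end a < right_end a \<and> right_end a \<le> n + 1
     \<and> above_set a \<subseteq> {left_end a<..<right_end a}"

definition arc_pos :: "arc \<Rightarrow> nat \<Rightarrow> int" where
  "arc_pos a k = (if k = left_end a \<or> k = right_end a then 0
                  else if k \<in> above_set a then 1 else -1)"

text \<open>Two (x-monotone) arcs are forced to cross in their interiors iff, on the common
 closed span, one is forced strictly above the other at some point and strictly below
 it at another point.\<close>
definition arcs_cross :: "arc \<Rightarrow> arc \<Rightarrow> bool" where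
  "arcs_cross a b \<longleftrightarrow>
     (\<exists>k k'. max (left_end a) (left_end b) \<le> k \<and> k \<le> min (right_end a) (right_end b)
          \<and> max (left_end a) (left_end b) \<le> k' \<and> k' \<le> min (right_end a) (right_end b)
          \<and> arc_pos a k > arc_pos b k \<and> arc_pos a k' < arc_pos b k')"

definition noncrossing_arc_diagram :: "nat \<Rightarrow> arc set \<Rightarrow> bool" where
  "noncrossing_arc_diagram n \<Delta> \<longleftrightarrow>
     (\<forall>a\<in>\<Delta>. is_arc n a) \<and>
     (\<forall>a\<in>\<Delta>. \<forall>b\<in>\<Delta>. a \<noteq> b \<longrightarrow>
        left_end a \<noteq> left_end b \<and> right_end a \<noteq> right_end b \<and> \<not> arcs_cross a b)"

definition cx_sortable :: "arc \<Rightarrow> bool" where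
  "cx_sortable a \<longleftrightarrow> above_set a = {k. left_end a < k \<and> k < right_end a \<and> odd k}"

definition MAD_cx :: "nat \<Rightarrow> arc set set" where
  "MAD_cx n = {\<Delta>. noncrossing_arc_diagram n \<Delta> \<and> (\<forall>a\<in>\<Delta>. cx_sortable a) \<and>
      (\<forall>\<Delta>'. noncrossing_arc_diagram n \<Delta>' \<and> (\<forall>a\<in>\<Delta>'. cx_sortable a) \<and> \<Delta> \<subseteq> \<Delta>'
             \<longrightarrow> \<Delta>' = \<Delta>)}"

datatype step = U | D | H

definition Psi :: "nat \<Rightarrow> arc set \<Rightarrow> step list" where
  "Psi n \<Delta> = map (\<lambda>i. if i \<le> n \<and> i + 1 \<notin> right_end ` \<Delta> then U
                      else if 2 \<le> i \<and> i - 1 \<notin> left_end ` \<Delta> then D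
                      else H) [1..<n+2]"

definition cnt :: "step \<Rightarrow> step list \<Rightarrow> nat" where
  "cnt s w = length (filter (\<lambda>x. x = s) w)"

definition motzkin_path :: "nat \<Rightarrow> step list \<Rightarrow> bool" where
  "motzkin_path m w \<longleftrightarrow> length w = m \<and> cnt U w = cnt D w \<and>
     (\<forall>p \<le> length w. cnt D (take p w) \<le> cnt U (take p w))"

definition has_peak_of_height :: "int \<Rightarrow> step list \<Rightarrow> bool" where
  "has_peak_of_height h w \<longleftrightarrow> (\<exists>k. k + 1 < length w \<and> w ! k = U \<and> w ! (k + 1) = D \<and>
      int (cnt U (take (k + 1) w)) - int (cnt D (take (k + 1) w)) = h)"

definition Mbar :: "nat \<Rightarrow> step list set" where
  "Mbar m = {w. motzkin_path m w \<and> \<not> has_peak_of_height 1 w}"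

end

theory Submission imports Defs begin

definition sp :: "nat \<Rightarrow> nat \<Rightarrow> nat \<Rightarrow> int" where
  "sp l r k = (if k = l \<or> k = r then 0 else if odd k then 1 else -1)"

lemma pos_sort: "cx_sortable b \<Longrightarrow> left_end b \<le> k \<Longrightarrow> k \<le> right_end b \<Longrightarrow>
   arc_pos b k = sp (left_end b) (right_end b) k"
  unfolding cx_sortable_def arc_pos_def sp_def by auto

definition sg :: "nat \<Rightarrow> int" where "sg k = (if odd k then 1 else -1)"

lemma sp_l: "sp l r l = 0" unfolding sp_def by simp
lemma sp_r: "sp l r r = 0" unfolding sp_def by simp
lemma sp_i: "k \<noteq> l \<Longrightarrow> k \<noteq> r \<Longrightarrow> sp l r k = sg k" unfolding sp_def sg_def by simp
lemma sg_Suc: "sg (Suc k) = - sg k" unfolding sg_def by simp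

lemma diffA:
  assumes "l \<noteq> m" "r \<noteq> m + 2" "l < r" "max m l \<le> j" "j \<le> min (m+2) r"
  shows "sp m (m+2) j - sp l r j = 0 \<or> sp m (m+2) j - sp l r j = sg (Suc m)"
proof -
  have j: "j = m \<or> j = Suc m \<or> j = Suc (Suc m)" using assms(4,5) by auto
  have a1: "sp m (m+2) (Suc m) = sg (Suc m)" by (rule sp_i) auto
  have a0: "sp m (m+2) m = 0" by (rule sp_l)
  have a2: "sp m (m+2) (Suc (Suc m)) = 0" using sp_r[of m "m+2"] by simp
  show ?thesis
  proof (cases "j = m")
    case True
    then have "l < m" using assms by auto
    show ?thesis
    proof (cases "r = m")
      case True then show ?thesis using \<open>j = m\<close> a0 sp_r[of l r] by simp
    next
      case False
      then have "sp l r m = sg m" using \<open>l < m\<close> by (intro sp_i) auto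
      then show ?thesis using \<open>j = m\<close> a0 sg_Suc[of m] by simp
    qed
  next
    case jm: False
    show ?thesis
    proof (cases "j = Suc m")
      case True
      show ?thesis
      proof (cases "l = Suc m \<or> r = Suc m")
        case True then show ?thesis using \<open>j = Suc m\<close> a1 sp_l[of l r] sp_r[of l r] by auto
      next
        case False
        then have "sp l r (Suc m) = sg (Suc m)" by (intro sp_i) auto
        then show ?thesis using \<open>j = Suc m\<close> a1 by simp
      qed
    next
      case False
      then have js: "j = Suc (Suc m)" using j jm by simp
      then have "r > Suc (Suc m)" using assms by auto
      show ?thesis
      proof (cases "l = Suc (Suc m)")
        case True then show ?thesis using js a2 sp_l[of l r] by simp
      next
        case False
        then have "sp l r (Suc (Suc m)) = sg (Suc (Suc m))" using \<open>r > Suc (Suc m)\<close> by (intro sp_i) auto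
        then show ?thesis using js a2 sg_Suc[of "Suc m"] by simp
      qed
    qed
  qed
qed

lemma crossA:
  assumes "l \<noteq> m" "r \<noteq> m + 2" "l < r"
    "max m l \<le> k" "k \<le> min (m+2) r" "max m l \<le> k'" "k' \<le> min (m+2) r"
    "sp m (m+2) k > sp l r k" "sp m (m+2) k' < sp l r k'"
  shows False
proof -
  have d1: "sp m (m+2) k - sp l r k = 0 \<or> sp m (m+2) k - sp l r k = sg (Suc m)"
    using diffA[OF assms(1-3,4,5)] .
  have d2: "sp m (m+2) k' - sp l r k' = 0 \<or> sp m (m+2) k' - sp l r k' = sg (Suc m)"
    using diffA[OF assms(1-3,6,7)] .
  have "sg (Suc m) = 1 \<or> sg (Suc m) = -1" unfolding sg_def by simp
  then show False using d1 d2 assms(8,9) by linarith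
qed

lemma diffB:
  assumes "l \<noteq> i" "r \<noteq> i + 1" "l < r" "\<not> (l < i \<and> i + 1 < r)"
    "max i l \<le> j" "j \<le> min (i+1) r"
  shows "sp i (i+1) j = 0 \<and> sp l r j = 0"
proof (cases "j = i")
  case True
  then have "r = i" using assms by auto
  then show ?thesis using True sp_l[of i "i+1"] sp_r[of l r] by simp
next
  case False
  then have "j = i + 1" using assms by auto
  then have "l = i + 1" using assms by auto
  then show ?thesis using \<open>j = i + 1\<close> sp_r[of i "i+1"] sp_l[of l r] by simp
qed

lemma crossB:
  assumes "l \<noteq> i" "r \<noteq> i + 1" "l < r" "\<not> (l < i \<and> i + 1 < r)"
    "max i l \<le> k" "k \<le> min (i+1) r" "max i l \<le> k'" "k' \<le> min (i+1) r"
    "sp i (i+1) k > sp l r k" "sp i (i+1) k' < sp l r k'"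
  shows False
  using diffB[OF assms(1-4,5,6)] assms(9) by simp

lemma cross_sp:
  assumes "cx_sortable a" "cx_sortable b" "arcs_cross a b"
  shows "\<exists>k k'. max (left_end a) (left_end b) \<le> k \<and> k \<le> min (right_end a) (right_end b)
          \<and> max (left_end a) (left_end b) \<le> k' \<and> k' \<le> min (right_end a) (right_end b)
          \<and> sp (left_end a) (right_end a) k > sp (left_end b) (right_end b) k
          \<and> sp (left_end a) (right_end a) k' < sp (left_end b) (right_end b) k'"
proof -
  obtain k k' where kk: "max (left_end a) (left_end b) \<le> k \<and> k \<le> min (right_end a) (right_end b)
          \<and> max (left_end a) (left_end b) \<le> k' \<and> k' \<le> min (right_end a) (right_end b)
          \<and> arc_pos a k > arc_pos b k \<and> arc_pos a k' < arc_pos b k'"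
    using assms(3) unfolding arcs_cross_def by blast
  have b: "left_end a \<le> k" "left_end b \<le> k" "k \<le> right_end a" "k \<le> right_end b"
    "left_end a \<le> k'" "left_end b \<le> k'" "k' \<le> right_end a" "k' \<le> right_end b"
    using kk by auto
  have e: "arc_pos a k = sp (left_end a) (right_end a) k" "arc_pos b k = sp (left_end b) (right_end b) k"
    "arc_pos a k' = sp (left_end a) (right_end a) k'" "arc_pos b k' = sp (left_end b) (right_end b) k'"
    using pos_sort[OF assms(1) b(1,3)] pos_sort[OF assms(2) b(2,4)]
      pos_sort[OF assms(1) b(5,7)] pos_sort[OF assms(2) b(6,8)] by auto
  show ?thesis
    apply (rule exI[of _ k], rule exI[of _ k'])
    using kk unfolding e by blast
qed

lemma add_arc:
  assumes "\<delta> \<in> MAD_cx n" "is_arc n a" "cx_sortable a"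
    "\<forall>b\<in>\<delta>. left_end b \<noteq> left_end a \<and> right_end b \<noteq> right_end a \<and> \<not> arcs_cross a b \<and> \<not> arcs_cross b a"
  shows "a \<in> \<delta>"
proof -
  have nc: "noncrossing_arc_diagram n \<delta>" and so: "\<forall>x\<in>\<delta>. cx_sortable x"
    and mx: "\<And>\<Delta>'. noncrossing_arc_diagram n \<Delta>' \<and> (\<forall>x\<in>\<Delta>'. cx_sortable x) \<and> \<delta> \<subseteq> \<Delta>' \<Longrightarrow> \<Delta>' = \<delta>"
    using assms(1) unfolding MAD_cx_def by auto
  have "noncrossing_arc_diagram n (insert a \<delta>)"
    using nc assms(2,4) unfolding noncrossing_arc_diagram_def by (metis insert_iff)
  moreover have "\<forall>x\<in>insert a \<delta>. cx_sortable x" using so assms(3) by auto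
  ultimately have "insert a \<delta> = \<delta>" using mx by blast
  then show ?thesis by blast
qed

lemma lemA:
  assumes "\<delta> \<in> MAD_cx n" "1 \<le> m" "m + 2 \<le> n + 1" "m \<notin> left_end ` \<delta>"
  shows "m + 2 \<in> right_end ` \<delta>"
proof (rule ccontr)
  assume nr: "m + 2 \<notin> right_end ` \<delta>"
  define a :: arc where "a = (m, m+2, {k. m < k \<and> k < m+2 \<and> odd k})"
  have la: "left_end a = m" "right_end a = m + 2" unfolding a_def left_end_def right_end_def by auto
  have ia: "is_arc n a" using assms(2,3) unfolding is_arc_def a_def left_end_def right_end_def above_set_def by auto
  have sa: "cx_sortable a" unfolding cx_sortable_def a_def left_end_def right_end_def above_set_def by auto
  have "\<forall>b\<in>\<delta>. left_end b \<noteq> left_end a \<and> right_end b \<noteq> right_end a \<and> \<not> arcs_cross a b \<and> \<not> arcs_cross b a"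
  proof
    fix b assume b: "b \<in> \<delta>"
    have sb: "cx_sortable b" and ib: "is_arc n b" using b assms(1) unfolding MAD_cx_def noncrossing_arc_diagram_def by auto
    have ne: "left_end b \<noteq> m" "right_end b \<noteq> m + 2" using b assms(4) nr by force+
    have lr: "left_end b < right_end b" using ib unfolding is_arc_def by auto
    have "\<not> arcs_cross a b"
    proof
      assume "arcs_cross a b"
      from cross_sp[OF sa sb this] show False unfolding la using crossA[OF ne lr] by blast
    qed
    moreover have "\<not> arcs_cross b a"
    proof
      assume "arcs_cross b a"
      from cross_sp[OF sb sa this] show False unfolding la using crossA[OF ne lr]
        by (metis max.commute min.commute)
    qed
    ultimately show "left_end b \<noteq> left_end a \<and> right_end b \<noteq> right_end a \<and> \<not> arcs_cross a b \<and> \<not> arcs_cross b a"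
      using ne la by auto
  qed
  then have "a \<in> \<delta>" using add_arc[OF assms(1) ia sa] by blast
  then show False using assms(4) la by force
qed

lemma lemB:
  assumes "\<delta> \<in> MAD_cx n" "1 \<le> i" "i \<le> n" "i \<notin> left_end ` \<delta>" "i + 1 \<notin> right_end ` \<delta>"
    "\<forall>b\<in>\<delta>. \<not> (left_end b < i \<and> i + 1 < right_end b)"
  shows False
proof -
  define a :: arc where "a = (i, i+1, {})"
  have la: "left_end a = i" "right_end a = i + 1" unfolding a_def left_end_def right_end_def by auto
  have ia: "is_arc n a" using assms(2,3) unfolding is_arc_def a_def left_end_def right_end_def above_set_def by auto
  have sa: "cx_sortable a" unfolding cx_sortable_def a_def left_end_def right_end_def above_set_def by auto
  have "\<forall>b\<in>\<delta>. left_end b \<noteq> left_end a \<and> right_end b \<noteq> right_end a \<and> \<not> arcs_cross a b \<and> \<not> arcs_cross b a"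
  proof
    fix b assume b: "b \<in> \<delta>"
    have sb: "cx_sortable b" and ib: "is_arc n b" using b assms(1) unfolding MAD_cx_def noncrossing_arc_diagram_def by auto
    have ne: "left_end b \<noteq> i" "right_end b \<noteq> i + 1" using b assms(4,5) by force+
    have lr: "left_end b < right_end b" using ib unfolding is_arc_def by auto
    have nn: "\<not> (left_end b < i \<and> i + 1 < right_end b)" using assms(6) b by blast
    have "\<not> arcs_cross a b"
    proof
      assume "arcs_cross a b"
      from cross_sp[OF sa sb this] show False unfolding la using crossB[OF ne lr nn] by blast
    qed
    moreover have "\<not> arcs_cross b a"
    proof
      assume "arcs_cross b a"
      from cross_sp[OF sb sa this] show False unfolding la using crossB[OF ne lr nn]
        by (metis max.commute min.commute)
    qed
    ultimately show "left_end b \<noteq> left_end a \<and> right_end b \<noteq> right_end a \<and> \<not> arcs_cross a b \<and> \<not> arcs_cross b a"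
      using ne la by auto
  qed
  then have "a \<in> \<delta>" using add_arc[OF assms(1) ia sa] by blast
  then show False using assms(4) la by force
qed

lemma card_le_Suc:
  assumes "finite A" "inj_on g A"
  shows "card {a\<in>A. g a \<le> Suc p} = card {a\<in>A. g a \<le> p} + (if Suc p \<in> g ` A then 1 else 0)"
proof -
  have eq: "{a\<in>A. g a \<le> Suc p} = {a\<in>A. g a \<le> p} \<union> {a\<in>A. g a = Suc p}" by auto
  have "card {a\<in>A. g a \<le> Suc p} = card {a\<in>A. g a \<le> p} + card {a\<in>A. g a = Suc p}"
    unfolding eq using assms(1) by (subst card_Un_disjoint) auto
  moreover have "card {a\<in>A. g a = Suc p} = (if Suc p \<in> g ` A then 1 else 0)"
  proof (cases "Suc p \<in> g ` A")
    case True
    then obtain a0 where "a0 \<in> A" "g a0 = Suc p" by auto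
    have e: "{a\<in>A. g a = Suc p} = {a0}" using assms(2) \<open>a0 \<in> A\<close> \<open>g a0 = Suc p\<close> unfolding inj_on_def by auto
    show ?thesis unfolding e using True by simp
  next
    case False
    have e: "{a\<in>A. g a = Suc p} = {}" using False by force
    show ?thesis unfolding e using False by simp
  qed
  ultimately show ?thesis by simp
qed

lemma cnt_snoc: "cnt s (xs @ [x]) = cnt s xs + (if x = s then 1 else 0)"
  unfolding cnt_def by simp

theorem proposition8p9:
  fixes n :: nat and \<delta> :: "arc set"
  assumes "n \<ge> 1" and "\<delta> \<in> MAD_cx n"
  shows "Psi n \<delta> \<in> Mbar (n + 1) \<and> int (card \<delta>) = int n - int (cnt U (Psi n \<delta>))"
proof -
  note M = assms(2)
  have arcs: "\<And>a. a \<in> \<delta> \<Longrightarrow> is_arc n a" using M unfolding MAD_cx_def noncrossing_arc_diagram_def by auto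
  have injL: "inj_on left_end \<delta>" and injR: "inj_on right_end \<delta>"
    using M unfolding MAD_cx_def noncrossing_arc_diagram_def inj_on_def by blast+
  have "right_end ` \<delta> \<subseteq> {..n+1}" using arcs unfolding is_arc_def by auto
  then have fin: "finite \<delta>" using injR finite_imageD finite_subset by blast
  define Ls where "Ls = left_end ` \<delta>"
  define Rs where "Rs = right_end ` \<delta>"
  define Lc where "Lc p = card {a\<in>\<delta>. left_end a \<le> p}" for p
  define Rc where "Rc p = card {a\<in>\<delta>. right_end a \<le> p}" for p
  define f where "f = (\<lambda>i. if i \<le> n \<and> i + 1 \<notin> Rs then U
                      else if 2 \<le> i \<and> i - 1 \<notin> Ls then D else H)"
  define w where "w = Psi n \<delta>"
  have w: "w = map f [1..<n+2]" unfolding w_def Psi_def f_def Ls_def Rs_def by simp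
  have lw: "length w = n + 1" unfolding w by (simp del: upt_Suc)
  have wn: "\<And>p. p < n + 1 \<Longrightarrow> w ! p = f (p + 1)" unfolding w by (simp del: upt_Suc)
  have tk: "\<And>p. p < n + 1 \<Longrightarrow> take (Suc p) w = take p w @ [f (p+1)]"
    using wn lw by (simp add: take_Suc_conv_app_nth)
  have LcS: "\<And>p. Lc (Suc p) = Lc p + (if Suc p \<in> Ls then 1 else 0)"
    unfolding Lc_def Ls_def using card_le_Suc[OF fin injL] by blast
  have RcS: "\<And>p. Rc (Suc p) = Rc p + (if Suc p \<in> Rs then 1 else 0)"
    unfolding Rc_def Rs_def using card_le_Suc[OF fin injR] by blast
  have e0: "{a\<in>\<delta>. left_end a \<le> 0} = {}" using arcs unfolding is_arc_def by fastforce
  have Lc0: "Lc 0 = 0" unfolding Lc_def e0 by simp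
  have "{a\<in>\<delta>. right_end a \<le> 1} = {}"
  proof -
    { fix a assume "a \<in> \<delta>" "right_end a \<le> 1"
      moreover have "1 \<le> left_end a \<and> left_end a < right_end a" using arcs[of a] \<open>a \<in> \<delta>\<close> unfolding is_arc_def by blast
      ultimately have False by linarith }
    then show ?thesis by blast
  qed
  then have Rc1: "Rc 1 = 0" unfolding Rc_def by (simp only: card.empty)
  have RcL: "\<And>p. Rc (Suc p) \<le> Lc p"
  proof -
    fix p
    have "{a\<in>\<delta>. right_end a \<le> Suc p} \<subseteq> {a\<in>\<delta>. left_end a \<le> p}" using arcs unfolding is_arc_def by fastforce
    then show "Rc (Suc p) \<le> Lc p" unfolding Rc_def Lc_def using fin by (simp add: card_mono)
  qed
  have en: "{a\<in>\<delta>. left_end a \<le> n} = \<delta>" using arcs unfolding is_arc_def by fastforce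
  have Lcn: "Lc n = card \<delta>" unfolding Lc_def en by simp
  have en1: "{a\<in>\<delta>. right_end a \<le> n+1} = \<delta>" using arcs unfolding is_arc_def by fastforce
  have Rcn: "Rc (n+1) = card \<delta>" unfolding Rc_def en1 by simp
  have I1: "\<And>p. p \<le> n \<Longrightarrow> cnt U (take p w) + Rc (p+1) = p"
  proof -
    fix p show "p \<le> n \<Longrightarrow> cnt U (take p w) + Rc (p+1) = p"
    proof (induction p)
      case 0 then show ?case using Rc1 by (simp add: cnt_def)
    next
      case (Suc p)
      have "cnt U (take (Suc p) w) = cnt U (take p w) + (if f (p+1) = U then 1 else 0)"
        using tk[of p] Suc.prems by (simp add: cnt_snoc)
      moreover have "(f (p+1) = U) = (Suc (Suc p) \<notin> Rs)" using Suc.prems unfolding f_def by auto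
      ultimately show ?case using Suc RcS[of "Suc p"] by auto
    qed
  qed
  have I2: "\<And>p. p \<le> n \<Longrightarrow> cnt D (take (p+1) w) + Lc p = p"
  proof -
    fix p show "p \<le> n \<Longrightarrow> cnt D (take (p+1) w) + Lc p = p"
    proof (induction p)
      case 0 then show ?case using Lc0 tk[of 0] by (simp add: cnt_def f_def)
    next
      case (Suc p)
      have "cnt D (take (Suc p + 1) w) = cnt D (take (p+1) w) + (if f (p+2) = D then 1 else 0)"
        using tk[of "p+1"] Suc.prems by (simp add: cnt_snoc)
      moreover have "(f (p+2) = D) = (Suc p \<notin> Ls)"
      proof (cases "Suc p \<in> Ls")
        case True then show ?thesis unfolding f_def by auto
      next
        case False
        have "\<not> (p + 2 \<le> n \<and> p + 3 \<notin> Rs)"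
          using lemA[OF M, of "p+1"] False unfolding Ls_def Rs_def by (auto simp: numeral_eq_Suc)
        then show ?thesis using False unfolding f_def by (auto simp: numeral_eq_Suc)
      qed
      ultimately show ?case using Suc LcS[of p] by auto
    qed
  qed
  have fn: "f (n+1) \<noteq> U" unfolding f_def by auto
  have cU: "cnt U w + card \<delta> = n"
  proof -
    have "cnt U (take (Suc n) w) = cnt U (take n w)" using tk[of n] fn by (simp add: cnt_snoc)
    moreover have "take (Suc n) w = w" using lw by simp
    ultimately have "cnt U w = cnt U (take n w)" by simp
    then show ?thesis using I1[of n] Rcn by simp
  qed
  have tw: "take (n+1) w = w" using lw by simp
  have "cnt D (take (n+1) w) + Lc n = n" using I2[of n] by blast
  then have cD: "cnt D w + card \<delta> = n" by (simp only: tw Lcn)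
  have pref: "\<forall>p \<le> length w. cnt D (take p w) \<le> cnt U (take p w)"
  proof (intro allI impI)
    fix p assume p: "p \<le> length w"
    show "cnt D (take p w) \<le> cnt U (take p w)"
    proof (cases p)
      case 0 then show ?thesis by (simp add: cnt_def)
    next
      case (Suc q)
      have qn: "q \<le> n" using p lw Suc by linarith
      have d: "cnt D (take p w) + Lc q = q" using I2[OF qn] Suc by simp
      show ?thesis
      proof (cases "q + 1 \<le> n")
        case True
        have "cnt U (take p w) + Rc (q+2) = q + 1" using I1[OF True] Suc by simp
        moreover have "Rc (q+2) \<le> Lc q + 1" using RcL[of "Suc q"] LcS[of q] by (simp split: if_splits)
        ultimately show ?thesis using d by linarith
      next
        case False
        then have "q = n" using qn by linarith
        then have "take p w = w" using Suc tw by simp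
        then show ?thesis using cU cD by simp
      qed
    qed
  qed
  have nopeak: "\<not> has_peak_of_height 1 w"
  proof
    assume "has_peak_of_height 1 w"
    then obtain k where k: "k + 1 < length w" "w ! k = U" "w ! (k + 1) = D"
      "int (cnt U (take (k + 1) w)) - int (cnt D (take (k + 1) w)) = 1"
      unfolding has_peak_of_height_def by blast
    have k1: "k + 1 < n + 1" and k0: "k < n + 1" using k(1) lw by linarith+
    have fk: "f (k+1) = U" "f (k+1+1) = D" using k(2,3) wn[OF k0] wn[OF k1] by simp_all
    have kn: "k + 1 \<le> n" and r2: "k + 1 + 1 \<notin> Rs" using fk(1) unfolding f_def by (auto split: if_splits)
    have l1: "k + 1 \<notin> Ls" using fk(2) unfolding f_def by (auto split: if_splits)
    have "cnt U (take (k+1) w) + Rc (k+1+1) = k + 1" using I1[OF kn] by simp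
    moreover have "cnt D (take (k+1) w) + Lc k = k" using I2[of k] kn by simp
    ultimately have "Rc (k+1+1) = Lc k" using k(4) by simp
    moreover have "Rc (Suc (k+1)) = Rc (k+1)" using RcS[of "k+1"] r2 by simp
    moreover have "Lc (Suc k) = Lc k" using LcS[of k] l1 by simp
    ultimately have eqc: "Rc (k+1) = Lc (k+1)" by simp
    have sub: "{a\<in>\<delta>. right_end a \<le> k+1} \<subseteq> {a\<in>\<delta>. left_end a \<le> k+1}" using arcs unfolding is_arc_def by fastforce
    have fs: "finite {a\<in>\<delta>. left_end a \<le> k+1}" using fin by simp
    have eqs: "{a\<in>\<delta>. right_end a \<le> k+1} = {a\<in>\<delta>. left_end a \<le> k+1}"
    proof (rule card_subset_eq[OF fs sub])
      show "card {a\<in>\<delta>. right_end a \<le> k+1} = card {a\<in>\<delta>. left_end a \<le> k+1}"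
        using eqc unfolding Rc_def Lc_def .
    qed
    have "\<forall>b\<in>\<delta>. \<not> (left_end b < k+1 \<and> k + 1 + 1 < right_end b)"
    proof (intro ballI notI)
      fix b assume b: "b \<in> \<delta>" and c: "left_end b < k+1 \<and> k + 1 + 1 < right_end b"
      have "b \<in> {a\<in>\<delta>. left_end a \<le> k+1}" using b c by simp
      then have "b \<in> {a\<in>\<delta>. right_end a \<le> k+1}" using eqs by blast
      then show False using c by simp
    qed
    moreover have "1 \<le> k + 1" by simp
    ultimately show False using lemB[OF M _ kn l1[unfolded Ls_def] r2[unfolded Rs_def]] by blast
  qed
  have ud: "cnt U w = cnt D w" using cU cD by linarith
  have "motzkin_path (n+1) w" unfolding motzkin_path_def using lw ud pref by blast
  then have mb: "w \<in> Mbar (n+1)" using nopeak unfolding Mbar_def by blast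
  have cd: "int (card \<delta>) = int n - int (cnt U w)"
  proof -
    have "int (cnt U w + card \<delta>) = int n" using cU by (rule arg_cong)
    then show ?thesis by (simp only: of_nat_add)
  qed
  show ?thesis using mb cd unfolding w_def by blast
qed

end
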